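(* Let $\{G^i\}_{i\in I}$ be a finite family of games over the same graph $\Gamma=(V,E)$ such that each $G^i$ has a nonempty set of Nash equilibria, and let $C,D\subseteq V$. Then $\prod_{i\in I}G^i\vDash C\rhd D$ if and only if $G^i\vDash C\rhd D$ for each $i\in I$.
   Context: A game over a finite simple undirected graph $\Gamma=(V,E)$ is a strategic game $(V,\{S_v\}_{v\in V},\{u_v\}_{v\in V})$ with player set $V$, finite strategy sets, and real pay-off functions $u_v$ depending only on the strategies of $v$ and its neighbours. $NE(G)$ is the set of pure Nash equilibria. For profiles $\mathbf s,\mathbf t$ and $X\subseteq V$, $\mathbf s=_X\mathbf t$ means they agree on every player of $X$; $G\vDash C\rhd D$ means for all $\mathbf s,\mathbf t\in NE(G)$, $\mathbf s=_C\mathbf t$ implies $\mathbf s=_D\mathbf t$. If $G^i=(V,\{S^i_v\},\{u^i_v\})$, the product $\prod_{i\in I}G^i$ is the game with player set $V$, strategy sets $S_v=\prod_{i\in I}S^i_v$, and pay-offs $u_v=\sum_{i\in I}u^i_v$ (each $u^i_v$ evaluated at the $i$-th components of the profile). *)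

theory Defs
  imports Complex_Main "HOL-Library.FuncSet"
begin

definition simple_graph :: "'v set \<Rightarrow> ('v \<Rightarrow> 'v \<Rightarrow> bool) \<Rightarrow> bool" where
  "simple_graph V E \<longleftrightarrow> finite V \<and> (\<forall>v w. E v w \<longrightarrow> v \<in> V \<and> w \<in> V)
     \<and> (\<forall>v w. E v w \<longrightarrow> E w v) \<and> (\<forall>v. \<not> E v v)"

definition game_over :: "'v set \<Rightarrow> ('v \<Rightarrow> 'v \<Rightarrow> bool) \<Rightarrow> ('v \<Rightarrow> 's set)
    \<Rightarrow> ('v \<Rightarrow> ('v \<Rightarrow> 's) \<Rightarrow> real) \<Rightarrow> bool" where
  "game_over V E S u \<longleftrightarrow> simple_graph V E \<and> (\<forall>v\<in>V. finite (S v)) \<and>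
     (\<forall>v\<in>V. \<forall>s\<in>PiE V S. \<forall>t\<in>PiE V S.
        (\<forall>w\<in>V. (w = v \<or> E v w) \<longrightarrow> s w = t w) \<longrightarrow> u v s = u v t)"

definition NE :: "'v set \<Rightarrow> ('v \<Rightarrow> 's set) \<Rightarrow> ('v \<Rightarrow> ('v \<Rightarrow> 's) \<Rightarrow> real)
    \<Rightarrow> ('v \<Rightarrow> 's) set" where
  "NE V S u = {s \<in> PiE V S. \<forall>v\<in>V. \<forall>x\<in>S v. u v (s(v := x)) \<le> u v s}"

definition entails :: "'v set \<Rightarrow> ('v \<Rightarrow> 's set) \<Rightarrow> ('v \<Rightarrow> ('v \<Rightarrow> 's) \<Rightarrow> real)
    \<Rightarrow> 'v set \<Rightarrow> 'v set \<Rightarrow> bool" where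
  "entails V S u C D \<longleftrightarrow> (\<forall>s\<in>NE V S u. \<forall>t\<in>NE V S u.
      (\<forall>c\<in>C. s c = t c) \<longrightarrow> (\<forall>d\<in>D. s d = t d))"

definition prod_strats :: "'i set \<Rightarrow> ('i \<Rightarrow> 'v \<Rightarrow> 's set) \<Rightarrow> 'v \<Rightarrow> ('i \<Rightarrow> 's) set" where
  "prod_strats I S v = PiE I (\<lambda>i. S i v)"

definition prod_payoff :: "'i set \<Rightarrow> 'v set \<Rightarrow> ('i \<Rightarrow> 'v \<Rightarrow> ('v \<Rightarrow> 's) \<Rightarrow> real)
    \<Rightarrow> 'v \<Rightarrow> ('v \<Rightarrow> ('i \<Rightarrow> 's)) \<Rightarrow> real" where
  "prod_payoff I V u v s = (\<Sum>i\<in>I. u i v (\<lambda>w\<in>V. s w i))"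

end

theory Submission
  imports Defs
begin

definition comp_prof :: "'v set \<Rightarrow> ('v \<Rightarrow> ('i \<Rightarrow> 's)) \<Rightarrow> 'i \<Rightarrow> ('v \<Rightarrow> 's)" where
  "comp_prof V s i = (\<lambda>w\<in>V. s w i)"

lemma comp_upd:
  assumes "v \<in> V"
  shows "comp_prof V (s(v := x)) i = (comp_prof V s i)(v := x i)"
  using assms by (auto simp: comp_prof_def fun_eq_iff)

lemma comp_in:
  assumes "s \<in> PiE V (prod_strats I S)" "i \<in> I"
  shows "comp_prof V s i \<in> PiE V (S i)"
  using assms by (auto simp: comp_prof_def prod_strats_def PiE_iff)

lemma NE_prod:
  assumes fin: "finite I"
  shows "s \<in> NE V (prod_strats I S) (prod_payoff I V u) \<longleftrightarrow>
    s \<in> PiE V (prod_strats I S) \<and> (\<forall>i\<in>I. comp_prof V s i \<in> NE V (S i) (u i))"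
proof
  assume s: "s \<in> NE V (prod_strats I S) (prod_payoff I V u)"
  hence sP: "s \<in> PiE V (prod_strats I S)" by (simp add: NE_def)
  have "comp_prof V s i \<in> NE V (S i) (u i)" if i: "i \<in> I" for i
    unfolding NE_def
  proof (intro CollectI conjI ballI)
    show "comp_prof V s i \<in> PiE V (S i)" using comp_in[OF sP i] .
    fix v y assume v: "v \<in> V" and y: "y \<in> S i v"
    define x where "x = (s v)(i := y)"
    have svP: "s v \<in> PiE I (\<lambda>j. S j v)" using sP v by (simp add: prod_strats_def PiE_iff)
    have xP: "x \<in> prod_strats I S v" unfolding x_def prod_strats_def
      using PiE_fun_upd[OF y svP] i by (simp add: insert_absorb)
    have le: "prod_payoff I V u v (s(v := x)) \<le> prod_payoff I V u v s"
      using s v xP by (auto simp: NE_def)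
    have eqj: "u j v (comp_prof V (s(v := x)) j) = u j v (comp_prof V s j)" if "j \<noteq> i" for j
    proof -
      have xj: "x j = s v j" using that by (simp add: x_def)
      have "(comp_prof V s j)(v := s v j) = comp_prof V s j" by (rule ext) (simp add: comp_prof_def v)
      with xj have "comp_prof V (s(v := x)) j = comp_prof V s j"
        unfolding comp_upd[OF v, of s x j] by simp
      thus ?thesis by simp
    qed
    have "prod_payoff I V u v (s(v := x)) = u i v (comp_prof V (s(v := x)) i)
        + (\<Sum>j\<in>I-{i}. u j v (comp_prof V (s(v := x)) j))"
      unfolding prod_payoff_def comp_prof_def[symmetric] using fin i by (simp add: sum.remove)
    also have "(\<Sum>j\<in>I-{i}. u j v (comp_prof V (s(v := x)) j)) = (\<Sum>j\<in>I-{i}. u j v (comp_prof V s j))"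
      using eqj by (intro sum.cong) auto
    finally have a: "prod_payoff I V u v (s(v := x)) = u i v (comp_prof V (s(v := x)) i)
        + (\<Sum>j\<in>I-{i}. u j v (comp_prof V s j))" .
    have b: "prod_payoff I V u v s = u i v (comp_prof V s i)
        + (\<Sum>j\<in>I-{i}. u j v (comp_prof V s j))"
      unfolding prod_payoff_def comp_prof_def[symmetric] using fin i by (simp add: sum.remove)
    have "comp_prof V (s(v := x)) i = (comp_prof V s i)(v := y)"
      using comp_upd[OF v, of s x i] by (simp add: x_def)
    then show "u i v ((comp_prof V s i)(v := y)) \<le> u i v (comp_prof V s i)"
      using le a b by simp
  qed
  thus "s \<in> PiE V (prod_strats I S) \<and> (\<forall>i\<in>I. comp_prof V s i \<in> NE V (S i) (u i))"
    using sP by blast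
next
  assume h: "s \<in> PiE V (prod_strats I S) \<and> (\<forall>i\<in>I. comp_prof V s i \<in> NE V (S i) (u i))"
  show "s \<in> NE V (prod_strats I S) (prod_payoff I V u)"
    unfolding NE_def
  proof (intro CollectI conjI ballI)
    show "s \<in> PiE V (prod_strats I S)" using h by blast
    fix v x assume v: "v \<in> V" and x: "x \<in> prod_strats I S v"
    have "u i v (comp_prof V (s(v := x)) i) \<le> u i v (comp_prof V s i)" if i: "i \<in> I" for i
    proof -
      have "x i \<in> S i v" using x i by (auto simp: prod_strats_def)
      hence "u i v ((comp_prof V s i)(v := x i)) \<le> u i v (comp_prof V s i)"
        using h i v by (auto simp: NE_def)
      thus ?thesis using comp_upd[OF v, of s x i] by simp
    qed
    thus "prod_payoff I V u v (s(v := x)) \<le> prod_payoff I V u v s"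
      unfolding prod_payoff_def comp_prof_def[symmetric] by (intro sum_mono) auto
  qed
qed

theorem lemma19:
  fixes I :: "'i set" and V :: "'v set" and E :: "'v \<Rightarrow> 'v \<Rightarrow> bool"
    and S :: "'i \<Rightarrow> 'v \<Rightarrow> 's set" and u :: "'i \<Rightarrow> 'v \<Rightarrow> ('v \<Rightarrow> 's) \<Rightarrow> real"
    and C D :: "'v set"
  assumes "finite I"
    and "\<forall>i\<in>I. game_over V E (S i) (u i)"
    and "\<forall>i\<in>I. NE V (S i) (u i) \<noteq> {}"
    and "C \<subseteq> V" and "D \<subseteq> V"
  shows "entails V (prod_strats I S) (prod_payoff I V u) C D
     \<longleftrightarrow> (\<forall>i\<in>I. entails V (S i) (u i) C D)"
proof
  assume L: "entails V (prod_strats I S) (prod_payoff I V u) C D"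
  show "\<forall>i\<in>I. entails V (S i) (u i) C D"
  proof (intro ballI)
    fix i assume i: "i \<in> I"
    have "\<forall>j\<in>I. \<exists>p. p \<in> NE V (S j) (u j)" using assms(3) by blast
    then obtain e where e0: "\<forall>j\<in>I. e j \<in> NE V (S j) (u j)" by (rule bchoice[elim_format]) blast
    hence e: "\<And>j. j \<in> I \<Longrightarrow> e j \<in> NE V (S j) (u j)" by blast
    show "entails V (S i) (u i) C D"
      unfolding entails_def
    proof (intro ballI impI)
      fix s' t' d
      assume s': "s' \<in> NE V (S i) (u i)" and t': "t' \<in> NE V (S i) (u i)"
        and ag: "\<forall>c\<in>C. s' c = t' c" and d: "d \<in> D"
      define mk where "mk = (\<lambda>p. \<lambda>w\<in>V. \<lambda>j\<in>I. if j = i then p w else e j w)"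
      have comp_mk: "comp_prof V (mk p) j = (if j = i then p else e j)"
        if j: "j \<in> I" and p: "p \<in> PiE V (S i)" for p j
      proof -
        have pe: "p \<in> extensional V" "e j \<in> extensional V"
          using p e[OF j] by (auto simp: NE_def PiE_iff)
        show ?thesis
        proof (rule ext)
          fix w show "comp_prof V (mk p) j w = (if j = i then p else e j) w"
            using pe j by (cases "w \<in> V") (auto simp: comp_prof_def mk_def extensional_def)
        qed
      qed
      have mkNE: "mk p \<in> NE V (prod_strats I S) (prod_payoff I V u)" if p: "p \<in> NE V (S i) (u i)" for p
      proof -
        have pP: "p \<in> PiE V (S i)" using p by (simp add: NE_def)
        have "mk p \<in> PiE V (prod_strats I S)"
          using pP e unfolding mk_def prod_strats_def NE_def by (auto simp: PiE_iff)
        moreover have "\<forall>j\<in>I. comp_prof V (mk p) j \<in> NE V (S j) (u j)"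
          using comp_mk[OF _ pP] p e i by auto
        ultimately show ?thesis using NE_prod[OF assms(1)] by blast
      qed
      have "\<forall>c\<in>C. mk s' c = mk t' c" using ag assms(4) by (auto simp: mk_def)
      hence "mk s' d = mk t' d" using L mkNE[OF s'] mkNE[OF t'] d unfolding entails_def by blast
      hence "mk s' d i = mk t' d i" by simp
      thus "s' d = t' d" using d assms(5) i by (auto simp: mk_def)
    qed
  qed
next
  assume R: "\<forall>i\<in>I. entails V (S i) (u i) C D"
  show "entails V (prod_strats I S) (prod_payoff I V u) C D"
    unfolding entails_def
  proof (intro ballI impI)
    fix s t d
    assume s: "s \<in> NE V (prod_strats I S) (prod_payoff I V u)"
      and t: "t \<in> NE V (prod_strats I S) (prod_payoff I V u)"
      and ag: "\<forall>c\<in>C. s c = t c" and d: "d \<in> D"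
    have sN: "\<forall>i\<in>I. comp_prof V s i \<in> NE V (S i) (u i)" and sP: "s \<in> PiE V (prod_strats I S)"
      using s unfolding NE_prod[OF assms(1)] by simp_all
    have tN: "\<forall>i\<in>I. comp_prof V t i \<in> NE V (S i) (u i)" and tP: "t \<in> PiE V (prod_strats I S)"
      using t unfolding NE_prod[OF assms(1)] by simp_all
    have "s d i = t d i" if i: "i \<in> I" for i
    proof -
      have "\<forall>c\<in>C. comp_prof V s i c = comp_prof V t i c"
        using ag assms(4) by (auto simp: comp_prof_def)
      hence "comp_prof V s i d = comp_prof V t i d"
        using R i sN tN d unfolding entails_def by meson
      thus ?thesis using d assms(5) by (auto simp: comp_prof_def)
    qed
    moreover have "s d \<in> PiE I (\<lambda>i. S i d)" "t d \<in> PiE I (\<lambda>i. S i d)"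
      using sP tP d assms(5) by (auto simp: prod_strats_def PiE_iff)
    ultimately show "s d = t d" by (metis PiE_ext)
  qed
qed

end
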